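(* There exist constants $c_0 \geq c_1 > 0$ such that for all sufficiently large $N$ there is a non-feasible pair $(N,M)$ for the family of line graphs of acyclic graphs, and the smallest such $M$ satisfies \[\frac{N^2}{2} - c_0N\sqrt{N} \leq M \leq \frac{N^2}{2} - c_1N\sqrt{N}.\]
   Context: All graphs are finite and simple; $L(G)$ denotes the line graph of $G$. For integers $N \ge 1$ and $0\le M\le\binom{N}{2}$, the pair $(N,M)$ is feasible for the family of line graphs of acyclic graphs if there is an acyclic graph (forest) $F$ such that $L(F)$ has exactly $N$ vertices (i.e. $F$ has $N$ edges) and exactly $M$ edges; otherwise it is non-feasible. *)

theory Defs
  imports Complex_Main
begin

text \<open>Isolated vertices play no role for line graphs, so vertices are
  taken from the type nat (every finite graph is isomorphic to one on nat).\<close>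

definition simple_graph_edges :: "'a set set \<Rightarrow> bool" where
  "simple_graph_edges E \<longleftrightarrow> finite E \<and> (\<forall>e\<in>E. card e = 2)"

definition is_cycle :: "'a set set \<Rightarrow> 'a list \<Rightarrow> bool" where
  "is_cycle E vs \<longleftrightarrow> length vs \<ge> 3 \<and> distinct vs \<and>
     (\<forall>i < length vs. {vs ! i, vs ! ((i + 1) mod length vs)} \<in> E)"

definition acyclic_graph :: "'a set set \<Rightarrow> bool" where
  "acyclic_graph E \<longleftrightarrow> simple_graph_edges E \<and> \<not> (\<exists>vs. is_cycle E vs)"

definition line_graph_edges :: "'a set set \<Rightarrow> 'a set set set" where
  "line_graph_edges E = {{e, f} | e f. e \<in> E \<and> f \<in> E \<and> e \<noteq> f \<and> e \<inter> f \<noteq> {}}"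

definition feasible_forest_pair :: "nat \<Rightarrow> nat \<Rightarrow> bool" where
  "feasible_forest_pair N M \<longleftrightarrow>
     (\<exists>E :: nat set set. acyclic_graph E \<and> card E = N \<and> card (line_graph_edges E) = M)"

definition non_feasible_forest_pair :: "nat \<Rightarrow> nat \<Rightarrow> bool" where
  "non_feasible_forest_pair N M \<longleftrightarrow> M \<le> N choose 2 \<and> \<not> feasible_forest_pair N M"

end

theory Submission
  imports Defs
begin


lemma choose2_Suc: "Suc n choose 2 = (n choose 2) + n"
  using binomial_Suc_Suc[of n 1] by (simp add: numeral_2_eq_2)

lemma two_choose2: "2 * (n choose 2) = n * (n - 1)"
proof (induction n)
  case (Suc n)
  then show ?case by (cases n) (auto simp: choose2_Suc algebra_simps)
qed simp

lemma choose2_mono: "m \<le> n \<Longrightarrow> (m choose 2) \<le> (n choose 2)"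
  by (simp add: choose_two div_le_mono mult_le_mono)

lemma LG_sub: "line_graph_edges E \<subseteq> Pow E"
  unfolding line_graph_edges_def by auto

lemma LG_finite: "finite E \<Longrightarrow> finite (line_graph_edges E)"
  using LG_sub finite_subset by blast

lemma pairs_card: "finite A \<Longrightarrow> card {X. X \<subseteq> A \<and> card X = 2} = card A choose 2"
  using n_subsets by blast

lemma deg_lower:
  assumes "finite E"
  shows "card {e\<in>E. v\<in>e} choose 2 \<le> card (line_graph_edges E)"
proof -
  have "{X. X \<subseteq> {e\<in>E. v\<in>e} \<and> card X = 2} \<subseteq> line_graph_edges E"
  proof
    fix X assume "X \<in> {X. X \<subseteq> {e\<in>E. v\<in>e} \<and> card X = 2}"
    then obtain e f where "X = {e,f}" "e \<noteq> f" "e \<in> E" "f \<in> E" "v \<in> e" "v \<in> f"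
      by (auto simp: card_2_iff)
    then show "X \<in> line_graph_edges E" unfolding line_graph_edges_def by blast
  qed
  then have "card {X. X \<subseteq> {e\<in>E. v\<in>e} \<and> card X = 2} \<le> card (line_graph_edges E)"
    by (intro card_mono LG_finite assms)
  then show ?thesis using pairs_card[of "{e\<in>E. v\<in>e}"] assms by simp
qed

lemma deg_small:
  assumes "simple_graph_edges E" and "\<And>v. card {e\<in>E. v\<in>e} \<le> t"
  shows "card (line_graph_edges E) \<le> card E * (2 * t)"
proof -
  have fin: "finite E" using assms(1) by (simp add: simple_graph_edges_def)
  have "line_graph_edges E \<subseteq> (\<Union>e\<in>E. (\<lambda>f. {e,f}) ` {f\<in>E. f \<inter> e \<noteq> {}})"
    unfolding line_graph_edges_def by blast
  then have "card (line_graph_edges E) \<le> card (\<Union>e\<in>E. (\<lambda>f. {e,f}) ` {f\<in>E. f \<inter> e \<noteq> {}})"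
    using fin by (intro card_mono) auto
  also have "\<dots> \<le> (\<Sum>e\<in>E. card ((\<lambda>f. {e,f}) ` {f\<in>E. f \<inter> e \<noteq> {}}))"
    using fin by (rule card_UN_le)
  also have "\<dots> \<le> (\<Sum>e\<in>E. 2 * t)"
  proof (rule sum_mono)
    fix e assume e: "e \<in> E"
    then obtain x y where xy: "e = {x,y}" using assms(1) by (auto simp: simple_graph_edges_def card_2_iff)
    have "{f\<in>E. f \<inter> e \<noteq> {}} \<subseteq> {f\<in>E. x\<in>f} \<union> {f\<in>E. y\<in>f}" using xy by auto
    then have "card {f\<in>E. f \<inter> e \<noteq> {}} \<le> card ({f\<in>E. x\<in>f} \<union> {f\<in>E. y\<in>f})"
      using fin by (intro card_mono) auto
    also have "\<dots> \<le> card {f\<in>E. x\<in>f} + card {f\<in>E. y\<in>f}" by (rule card_Un_le)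
    also have "\<dots> \<le> 2 * t" using assms(2)[of x] assms(2)[of y] by simp
    finally show "card ((\<lambda>f. {e,f}) ` {f\<in>E. f \<inter> e \<noteq> {}}) \<le> 2 * t"
      using card_image_le[of "{f\<in>E. f \<inter> e \<noteq> {}}" "\<lambda>f. {e,f}"] fin by simp
  qed
  also have "\<dots> = card E * (2 * t)" by simp
  finally show ?thesis .
qed

lemma triangle:
  assumes "acyclic_graph E" "{v,x} \<in> E" "{x,y} \<in> E" "{y,v} \<in> E" "v \<noteq> x" "x \<noteq> y" "y \<noteq> v"
  shows False
proof -
  have "is_cycle E [v,x,y]"
    unfolding is_cycle_def
  proof (intro conjI allI impI)
    fix i assume "i < length [v,x,y]"
    then have "i = 0 \<or> i = 1 \<or> i = 2" by auto
    then show "{[v,x,y] ! i, [v,x,y] ! ((i + 1) mod length [v,x,y])} \<in> E"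
      using assms by auto
  qed (use assms in auto)
  then show False using assms(1) by (auto simp: acyclic_graph_def)
qed

lemma edge_at:
  assumes "card e = 2" "v \<in> e"
  obtains x where "e = {v,x}" "x \<noteq> v"
  using assms by (auto simp: card_2_iff insert_commute)

lemma deg_mid:
  assumes ac: "acyclic_graph E"
  shows "card (line_graph_edges E) \<le> (card {e\<in>E. v\<in>e} choose 2)
     + ((card E - card {e\<in>E. v\<in>e}) choose 2) + (card E - card {e\<in>E. v\<in>e})"
proof -
  define Ev where "Ev = {e\<in>E. v\<in>e}"
  define E' where "E' = E - Ev"
  have sg: "simple_graph_edges E" using ac by (simp add: acyclic_graph_def)
  have fin: "finite E" using sg by (simp add: simple_graph_edges_def)
  have c2: "\<And>e. e \<in> E \<Longrightarrow> card e = 2" using sg by (simp add: simple_graph_edges_def)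
  have finv: "finite Ev" "finite E'" using fin by (auto simp: Ev_def E'_def)
  have cE': "card E' = card E - card Ev"
    unfolding E'_def by (rule card_Diff_subset) (use finv in \<open>auto simp: Ev_def\<close>)
  define P1 where "P1 = {X. X \<subseteq> Ev \<and> card X = 2}"
  define P2 where "P2 = {X. X \<subseteq> E' \<and> card X = 2}"
  define P3 where "P3 = (\<Union>f\<in>E'. (\<lambda>e. {e,f}) ` {e\<in>Ev. e \<inter> f \<noteq> {}})"
  have sub: "line_graph_edges E \<subseteq> P1 \<union> P2 \<union> P3"
  proof
    fix X assume "X \<in> line_graph_edges E"
    then obtain e f where X: "X = {e,f}" "e \<in> E" "f \<in> E" "e \<noteq> f" "e \<inter> f \<noteq> {}"
      unfolding line_graph_edges_def by blast
    have cX: "card X = 2" using X by simp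
    show "X \<in> P1 \<union> P2 \<union> P3"
    proof (cases "e \<in> Ev")
      case True
      show ?thesis
      proof (cases "f \<in> Ev")
        case True
        then show ?thesis using \<open>e \<in> Ev\<close> X cX by (auto simp: P1_def)
      next
        case False
        then have "f \<in> E'" using X by (auto simp: E'_def)
        then show ?thesis using \<open>e \<in> Ev\<close> X unfolding P3_def by blast
      qed
    next
      case False
      then have eE': "e \<in> E'" using X by (auto simp: E'_def)
      show ?thesis
      proof (cases "f \<in> Ev")
        case True
        have "X = {f,e}" using X by auto
        then show ?thesis using True eE' X unfolding P3_def by blast
      next
        case False
        then have "f \<in> E'" using X by (auto simp: E'_def)
        then show ?thesis using eE' X cX by (auto simp: P2_def)
      qed
    qed
  qed
  have finP: "finite P1" "finite P2" "finite P3"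
    using finv by (auto simp: P1_def P2_def P3_def)
  have "card (line_graph_edges E) \<le> card (P1 \<union> P2 \<union> P3)"
    using sub finP by (intro card_mono) auto
  also have "\<dots> \<le> card P1 + card P2 + card P3"
    by (metis card_Un_le add_le_mono le_trans order_refl)
  also have "card P1 = card Ev choose 2" unfolding P1_def by (rule pairs_card[OF finv(1)])
  also have "card P2 = card E' choose 2" unfolding P2_def by (rule pairs_card[OF finv(2)])
  also have "card P3 \<le> card E'"
  proof -
    have "card P3 \<le> (\<Sum>f\<in>E'. card ((\<lambda>e. {e,f}) ` {e\<in>Ev. e \<inter> f \<noteq> {}}))"
      unfolding P3_def using finv by (intro card_UN_le) 
    also have "\<dots> \<le> (\<Sum>f\<in>E'. 1)"
    proof (rule sum_mono)
      fix f assume f: "f \<in> E'"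
      have "card {e\<in>Ev. e \<inter> f \<noteq> {}} \<le> Suc 0"
      proof (subst card_le_Suc0_iff_eq)
        show "finite {e\<in>Ev. e \<inter> f \<noteq> {}}" using finv by auto
        show "\<forall>e1\<in>{e\<in>Ev. e \<inter> f \<noteq> {}}. \<forall>e2\<in>{e\<in>Ev. e \<inter> f \<noteq> {}}. e1 = e2"
        proof (intro ballI, rule ccontr)
          fix e1 e2 assume e1: "e1 \<in> {e\<in>Ev. e \<inter> f \<noteq> {}}" and e2: "e2 \<in> {e\<in>Ev. e \<inter> f \<noteq> {}}"
            and ne: "e1 \<noteq> e2"
          have e1E: "e1 \<in> E" "v \<in> e1" and e2E: "e2 \<in> E" "v \<in> e2" using e1 e2 by (auto simp: Ev_def)
          obtain x1 where x1: "e1 = {v,x1}" "x1 \<noteq> v" using edge_at[OF c2[OF e1E(1)] e1E(2)] by blast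
          obtain x2 where x2: "e2 = {v,x2}" "x2 \<noteq> v" using edge_at[OF c2[OF e2E(1)] e2E(2)] by blast
          have fE: "f \<in> E" "v \<notin> f" using f by (auto simp: E'_def Ev_def)
          have "x1 \<in> f" "x2 \<in> f" using e1 e2 x1 x2 fE by auto
          have "x1 \<noteq> x2" using ne x1 x2 by auto
          have "f = {x1,x2}"
            using c2[OF fE(1)] \<open>x1 \<in> f\<close> \<open>x2 \<in> f\<close> \<open>x1 \<noteq> x2\<close> by (auto simp: card_2_iff)
          show False
            using triangle[OF ac, of v x1 x2] e1E e2E x1 x2 fE \<open>f = {x1,x2}\<close> \<open>x1 \<noteq> x2\<close>
            by (auto simp: insert_commute)
        qed
      qed
      then show "card ((\<lambda>e. {e,f}) ` {e\<in>Ev. e \<inter> f \<noteq> {}}) \<le> 1"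
        using card_image_le[of "{e\<in>Ev. e \<inter> f \<noteq> {}}" "\<lambda>e. {e,f}"] finv by simp
    qed
    also have "\<dots> = card E'" by simp
    finally show ?thesis .
  qed
  finally show ?thesis using cE' by (simp add: Ev_def)
qed



lemma max_acyclic:
  assumes sg: "simple_graph_edges E" and mx: "\<And>e f. e \<in> E \<Longrightarrow> f \<in> E \<Longrightarrow> Max e \<in> f \<Longrightarrow> e = f"
  shows "acyclic_graph (E :: nat set set)"
  unfolding acyclic_graph_def
proof (intro conjI sg notI)
  assume "\<exists>vs. is_cycle E vs"
  then obtain vs where cy: "is_cycle E vs" by blast
  define n where "n = length vs"
  have n3: "n \<ge> 3" and dist: "distinct vs" and ed: "\<And>i. i < n \<Longrightarrow> {vs ! i, vs ! ((i + 1) mod n)} \<in> E"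
    using cy by (auto simp: is_cycle_def n_def)
  define y where "y = Max (set vs)"
  have "y \<in> set vs" unfolding y_def using n3 n_def by (intro Max_in) auto
  then obtain i where i: "i < n" "vs ! i = y" by (auto simp: in_set_conv_nth n_def)
  define j where "j = (i + 1) mod n"
  define k where "k = (i + n - 1) mod n"
  have jn: "j < n" "k < n" using n3 by (auto simp: j_def k_def)
  have kdef: "k = (if i = 0 then n - 1 else i - 1)"
  proof (cases "i = 0")
    case True then show ?thesis using n3 by (simp add: k_def)
  next
    case False
    then obtain i' where "i = Suc i'" by (cases i) auto
    then show ?thesis using i(1) by (simp add: k_def)
  qed
  have jdef: "j = (if i = n - 1 then 0 else i + 1)"
  proof (cases "i = n - 1")
    case True then have "i + 1 = n" using n3 by simp
    then show ?thesis using True by (simp add: j_def)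
  next
    case False then show ?thesis using i(1) by (simp add: j_def)
  qed
  have ki: "(k + 1) mod n = i"
    using kdef n3 i(1) by (cases "i = 0") auto
  have jk: "j \<noteq> k" "j \<noteq> i" "k \<noteq> i"
    using kdef jdef n3 i(1) by (auto split: if_splits)
  have e1: "{y, vs ! j} \<in> E" using ed[OF i(1)] i by (simp add: j_def)
  have e2: "{vs ! k, y} \<in> E" using ed[OF jn(2)] ki i by simp
  have "vs ! j \<in> set vs" using jn n_def by simp
  then have "vs ! j \<le> y" unfolding y_def by simp
  then have "Max {y, vs ! j} = y" by (simp add: max_def)
  then have "{y, vs ! j} = {vs ! k, y}" using mx[OF e1 e2] by simp
  moreover have "vs ! j \<noteq> y" "vs ! j \<noteq> vs ! k"
    using dist jk jn i n_def by (auto simp: nth_eq_iff_index_eq)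
  ultimately show False by auto
qed

definition star :: "nat \<Rightarrow> nat \<Rightarrow> nat set set" where
  "star p s = (\<lambda>i. {p, p + i}) ` {1..s}"

fun forest :: "nat \<Rightarrow> nat list \<Rightarrow> nat set set" where
  "forest p [] = {}"
| "forest p (s # ss) = star p s \<union> forest (Suc (p + s)) ss"

lemma forest_ge: "e \<in> forest p ss \<Longrightarrow> x \<in> e \<Longrightarrow> p \<le> x"
proof (induction ss arbitrary: p)
  case (Cons s ss)
  show ?case
  proof (cases "e \<in> star p s")
    case True then show ?thesis using Cons.prems by (auto simp: star_def)
  next
    case False
    then have "Suc (p+s) \<le> x" using Cons by auto
    then show ?thesis by simp
  qed
qed simp

lemma forest_simple: "simple_graph_edges (forest p ss)"
  by (induction ss arbitrary: p) (auto simp: simple_graph_edges_def star_def)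

lemma star_card: "card (star p s) = s"
  unfolding star_def by (subst card_image) (auto simp: inj_on_def doubleton_eq_iff)

lemma forest_card: "card (forest p ss) = sum_list ss"
proof (induction ss arbitrary: p)
  case (Cons s ss)
  have "star p s \<inter> forest (Suc (p + s)) ss = {}"
    using forest_ge[of _ "Suc (p + s)" ss] by (fastforce simp: star_def)
  moreover have "finite (star p s)" by (simp add: star_def)
  moreover have "finite (forest (Suc (p + s)) ss)"
    using forest_simple[of "Suc (p+s)" ss] by (simp add: simple_graph_edges_def)
  ultimately have "card (forest p (s # ss)) = card (star p s) + card (forest (Suc (p + s)) ss)"
    by (simp add: card_Un_disjoint)
  then show ?case using Cons.IH star_card by simp
qed simp

lemma forest_max: "e \<in> forest p ss \<Longrightarrow> f \<in> forest p ss \<Longrightarrow> Max e \<in> f \<Longrightarrow> e = f"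
proof (induction ss arbitrary: p)
  case (Cons s ss)
  let ?R = "forest (Suc (p + s)) ss"
  show ?case
  proof (cases "e \<in> star p s")
    case True
    then obtain i where ei: "e = {p, p+i}" "1 \<le> i" "i \<le> s" by (auto simp: star_def)
    then have me: "Max e = p + i" by (simp add: max_def)
    show ?thesis
    proof (cases "f \<in> star p s")
      case True
      then obtain j where fj: "f = {p, p+j}" "1 \<le> j" by (auto simp: star_def)
      have "p + i \<in> {p, p+j}" using Cons.prems(3) me fj by simp
      then have "i = j" using ei(2) by auto
      then show ?thesis using ei fj by simp
    next
      case False
      then have "f \<in> ?R" using Cons.prems by auto
      then have "Suc (p + s) \<le> p + i" using forest_ge[of f "Suc (p + s)" ss "p+i"] Cons.prems(3) me by simp
      then show ?thesis using ei by simp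
    qed
  next
    case False
    then have eR: "e \<in> ?R" using Cons.prems by auto
    have "card e = 2" using forest_simple[of "Suc (p + s)" ss] eR by (simp add: simple_graph_edges_def)
    then obtain x y where "e = {x,y}" by (auto simp: card_2_iff)
    then have "Max e \<in> e" by (simp add: max_def)
    then have ge: "Suc (p + s) \<le> Max e" using forest_ge[OF eR] by blast
    show ?thesis
    proof (cases "f \<in> star p s")
      case True
      then obtain j where fj: "f = {p, p+j}" "j \<le> s" by (auto simp: star_def)
      then have "Max e \<le> p + s" using Cons.prems(3) by auto
      then show ?thesis using ge by simp
    next
      case False
      then have "f \<in> ?R" using Cons.prems by auto
      then show ?thesis using Cons.IH eR Cons.prems(3) by blast
    qed
  qed
qed simp

lemma LG_star: "line_graph_edges (star p s) = {X. X \<subseteq> star p s \<and> card X = 2}"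
proof
  show "line_graph_edges (star p s) \<subseteq> {X. X \<subseteq> star p s \<and> card X = 2}"
  proof
    fix X assume "X \<in> line_graph_edges (star p s)"
    then obtain e f where X: "X = {e,f}" "e \<noteq> f" "e \<in> star p s" "f \<in> star p s"
      unfolding line_graph_edges_def by blast
    then show "X \<in> {X. X \<subseteq> star p s \<and> card X = 2}" by simp
  qed
  show "{X. X \<subseteq> star p s \<and> card X = 2} \<subseteq> line_graph_edges (star p s)"
  proof
    fix X assume "X \<in> {X. X \<subseteq> star p s \<and> card X = 2}"
    then obtain e f where X: "X = {e,f}" "e \<noteq> f" "e \<in> star p s" "f \<in> star p s"
      by (auto simp: card_2_iff)
    then have "p \<in> e" "p \<in> f" by (auto simp: star_def)
    then show "X \<in> line_graph_edges (star p s)" using X unfolding line_graph_edges_def by blast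
  qed
qed

lemma LG_union:
  assumes "\<And>e f. e \<in> A \<Longrightarrow> f \<in> B \<Longrightarrow> e \<inter> f = {}"
  shows "line_graph_edges (A \<union> B) = line_graph_edges A \<union> line_graph_edges B"
proof
  show "line_graph_edges (A \<union> B) \<subseteq> line_graph_edges A \<union> line_graph_edges B"
  proof
    fix X assume "X \<in> line_graph_edges (A \<union> B)"
    then obtain e f where X: "X = {e,f}" "e \<in> A \<union> B" "f \<in> A \<union> B" "e \<noteq> f" "e \<inter> f \<noteq> {}"
      unfolding line_graph_edges_def by blast
    have "(e \<in> A \<and> f \<in> A) \<or> (e \<in> B \<and> f \<in> B)"
      using X assms[of e f] assms[of f e] by (auto simp: Int_commute)
    then show "X \<in> line_graph_edges A \<union> line_graph_edges B"
      using X unfolding line_graph_edges_def by blast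
  qed
  show "line_graph_edges A \<union> line_graph_edges B \<subseteq> line_graph_edges (A \<union> B)"
    unfolding line_graph_edges_def by blast
qed

lemma forest_LG: "card (line_graph_edges (forest p ss)) = sum_list (map (\<lambda>s. s choose 2) ss)"
proof (induction ss arbitrary: p)
  case (Cons s ss)
  let ?R = "forest (Suc (p + s)) ss"
  have dis: "e \<inter> f = {}" if ef: "e \<in> star p s" "f \<in> ?R" for e f
  proof (rule equals0I)
    fix x assume x: "x \<in> e \<inter> f"
    obtain i where "e = {p, p+i}" "i \<le> s" using ef(1) by (auto simp: star_def)
    then have "x \<le> p + s" using x by auto
    moreover have "Suc (p + s) \<le> x" using forest_ge[OF ef(2)] x by blast
    ultimately show False by simp
  qed
  have finR: "finite ?R" using forest_simple[of "Suc (p+s)" ss] by (simp add: simple_graph_edges_def)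
  have finS: "finite (star p s)" by (simp add: star_def)
  have d2: "line_graph_edges (star p s) \<inter> line_graph_edges ?R = {}"
  proof (rule ccontr)
    assume "line_graph_edges (star p s) \<inter> line_graph_edges ?R \<noteq> {}"
    then obtain X where "X \<in> line_graph_edges (star p s)" "X \<in> line_graph_edges ?R" by blast
    then have XX: "X \<subseteq> star p s" "X \<subseteq> ?R"
      using LG_sub[of "star p s"] LG_sub[of ?R] by auto
    have "X \<noteq> {}" using \<open>X \<in> line_graph_edges ?R\<close> unfolding line_graph_edges_def by auto
    then obtain e where "e \<in> X" by blast
    then have "e \<in> star p s" "e \<in> ?R" using XX by auto
    moreover have "p \<in> e" using \<open>e \<in> star p s\<close> by (auto simp: star_def)
    ultimately show False using dis[of e e] by blast
  qed
  have "card (line_graph_edges (forest p (s # ss))) = card (line_graph_edges (star p s)) + card (line_graph_edges ?R)"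
    using LG_union[of "star p s" ?R, OF dis] d2 LG_finite[OF finS] LG_finite[OF finR]
    by (simp add: card_Un_disjoint)
  also have "card (line_graph_edges (star p s)) = s choose 2"
    using LG_star pairs_card[OF finS] star_card by simp
  finally show ?case using Cons by simp
qed (simp add: line_graph_edges_def)

lemma forest_feasible: "feasible_forest_pair (sum_list ss) (sum_list (map (\<lambda>s. s choose 2) ss))"
  unfolding feasible_forest_pair_def
proof (intro exI conjI)
  show "acyclic_graph (forest 0 ss)" by (rule max_acyclic[OF forest_simple forest_max])
qed (rule forest_card, rule forest_LG)



lemma exists_level: "\<exists>a. a choose 2 \<le> m \<and> m < Suc a choose 2"
proof (induction m)
  case 0
  show ?case by (rule exI[of _ 1]) (simp add: choose2_Suc)
next
  case (Suc m)
  then obtain a where a: "a choose 2 \<le> m" "m < Suc a choose 2" by blast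
  show ?case
  proof (cases "Suc m < Suc a choose 2")
    case True then show ?thesis using a by (intro exI[of _ a]) simp
  next
    case False
    then have "Suc m = Suc a choose 2" using a by simp
    then show ?thesis by (intro exI[of _ "Suc a"]) (simp add: choose2_Suc[of "Suc a"])
  qed
qed

lemma int_choose2: "2 * int (n choose 2) = int n * (int n - 1)"
proof -
  have "int (2 * (n choose 2)) = int (n * (n - 1))" by (simp only: two_choose2)
  then show ?thesis by (cases n) (auto simp: algebra_simps)
qed

lemma aux_ineq: "(2::int) * X + 2 * Z = 2 * Y \<Longrightarrow> 0 \<le> Z \<Longrightarrow> X \<le> Y"
  by linarith

lemma convex2:
  assumes "t + 1 \<le> D" "D + t \<le> N"
  shows "(D choose 2) + ((N - D) choose 2) + (N - D) \<le> ((N - t) choose 2) + (t choose 2) + t"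
proof -
  define w where "w = D - (t + 1)"
  define d where "d = N - D - t"
  have D: "D = t + 1 + w" using assms w_def by simp
  have ND: "N - D = t + d" using assms d_def by simp
  have Nt: "N - t = t + 1 + w + d" using assms d_def w_def by simp
  have "2 * int ((D choose 2) + ((N - D) choose 2) + (N - D)) + 2 * (int d * int w)
      = 2 * int (((N - t) choose 2) + (t choose 2) + t)"
    unfolding of_nat_add distrib_left int_choose2 ND Nt
    by (simp add: D algebra_simps)
  moreover have "0 \<le> int d * int w" by simp
  ultimately have "int ((D choose 2) + ((N - D) choose 2) + (N - D)) \<le> int (((N - t) choose 2) + (t choose 2) + t)"
    by (rule aux_ineq)
  then show ?thesis by simp
qed

lemma nonfeasible:
  assumes t1: "1 \<le> t" and t2: "2 * t + 1 \<le> N" and t3: "(Suc t choose 2) + 1 < N - t"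
    and t4: "N * (2 * t) < ((N - t) choose 2) + (Suc t choose 2) + 1"
  shows "\<not> feasible_forest_pair N (((N - t) choose 2) + (Suc t choose 2) + 1)"
proof
  let ?M = "((N - t) choose 2) + (Suc t choose 2) + 1"
  assume "feasible_forest_pair N ?M"
  then obtain E :: "nat set set" where E: "acyclic_graph E" "card E = N" "card (line_graph_edges E) = ?M"
    unfolding feasible_forest_pair_def by blast
  have sg: "simple_graph_edges E" using E(1) by (simp add: acyclic_graph_def)
  have fin: "finite E" using sg by (simp add: simple_graph_edges_def)
  consider (big) v where "N - t + 1 \<le> card {e\<in>E. v\<in>e}"
    | (mid) v where "t + 1 \<le> card {e\<in>E. v\<in>e}" "card {e\<in>E. v\<in>e} \<le> N - t"
    | (small) "\<And>v. card {e\<in>E. v\<in>e} \<le> t"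
    by (metis not_less_eq_eq Suc_eq_plus1 linorder_not_le)
  then show False
  proof cases
    case big
    have "Suc (N - t) choose 2 \<le> card {e\<in>E. v\<in>e} choose 2" using big by (intro choose2_mono) simp
    also have "\<dots> \<le> ?M" using deg_lower[OF fin, of v] E(3) by simp
    finally show False using t3 by (simp add: choose2_Suc)
  next
    case mid
    have "?M \<le> (card {e\<in>E. v\<in>e} choose 2) + ((N - card {e\<in>E. v\<in>e}) choose 2) + (N - card {e\<in>E. v\<in>e})"
      using deg_mid[OF E(1), of v] E(2,3) by simp
    also have "\<dots> \<le> ((N - t) choose 2) + (t choose 2) + t"
      using mid t2 by (intro convex2) auto
    finally show False by (simp add: choose2_Suc)
  next
    case small
    have "?M \<le> N * (2 * t)" using deg_small[OF sg small] E by simp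
    then show False using t4 by simp
  qed
qed

lemma lower_feasible:
  assumes u1: "3 * u \<le> N" and u2: "2 * N \<le> u * u" and m: "m < Suc (N - 3 * u) choose 2"
  shows "feasible_forest_pair N m"
proof -
  define A where "A = N - 3 * u"
  obtain a where a: "a choose 2 \<le> m" "m < Suc a choose 2" using exists_level by blast
  have aA: "a \<le> A"
  proof (rule ccontr)
    assume "\<not> a \<le> A"
    then have "Suc A choose 2 \<le> a choose 2" by (intro choose2_mono) simp
    then show False using a m by (simp add: A_def)
  qed
  define r where "r = m - (a choose 2)"
  have ra: "r < a" using a by (simp add: r_def choose2_Suc)
  obtain b where b: "b choose 2 \<le> r" "r < Suc b choose 2" using exists_level by blast
  define r' where "r' = r - (b choose 2)"
  have rb: "r' < b" using b by (simp add: r'_def choose2_Suc)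
  have bu: "b \<le> u"
  proof (rule ccontr)
    assume "\<not> b \<le> u"
    then have "Suc u \<le> b" by simp
    then have "Suc u * u \<le> b * (b - 1)" by (intro mult_le_mono) auto
    also have "\<dots> = 2 * (b choose 2)" by (simp add: two_choose2)
    also have "\<dots> < 2 * N" using b ra aA by (simp add: A_def)
    finally show False using u2 by simp
  qed
  define j where "j = N - (a + b + 2 * r')"
  have cost: "a + b + 2 * r' \<le> N" using aA bu rb u1 by (simp add: A_def)
  define ss where "ss = [a, b] @ replicate r' 2 @ replicate j 1"
  have "sum_list ss = N" using cost by (simp add: ss_def j_def sum_list_replicate)
  moreover have "sum_list (map (\<lambda>s. s choose 2) ss) = m"
    using a b by (simp add: ss_def r'_def r_def sum_list_replicate)
  ultimately show ?thesis using forest_feasible[of ss] by simp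
qed



lemma real_choose2: "real (n choose 2) = real n * (real n - 1) / 2"
proof -
  have "real (2 * (n choose 2)) = real (n * (n - 1))" by (simp only: two_choose2)
  then show ?thesis by (cases n) (auto simp: algebra_simps)
qed

lemma real_choose2': "2 * real (n choose 2) = real n * real n - real n"
proof -
  have "real (2 * (n choose 2)) = real (n * (n - 1))" by (simp only: two_choose2)
  then show ?thesis by (cases n) (simp_all add: algebra_simps)
qed

lemma main_N:
  assumes N: "N \<ge> (10000::nat)"
  shows "(\<exists>M. non_feasible_forest_pair N M) \<and>
       real N ^ 2 / 2 - 5 * real N * sqrt (real N)
         \<le> real (LEAST M. non_feasible_forest_pair N M) \<and>
       real (LEAST M. non_feasible_forest_pair N M)
         \<le> real N ^ 2 / 2 - 1/2 * real N * sqrt (real N)"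
proof -
  define s where "s = sqrt (real N)"
  have s100: "100 \<le> s" unfolding s_def using N by (intro real_le_rsqrt) simp
  have sN: "s * s = real N" unfolding s_def by simp
  define t where "t = nat \<lfloor>s\<rfloor>"
  have rt: "real t \<le> s" "s < real t + 1" using s100 unfolding t_def by linarith+
  define u where "u = nat \<lceil>sqrt 2 * s\<rceil>"
  have sq2a: "sqrt 2 < 3/2" by (rule real_less_lsqrt) (auto simp: power2_eq_square)
  have sq2b: "1 \<le> sqrt 2" by (rule real_le_rsqrt) (auto simp: power2_eq_square)
  note sq2 = sq2a sq2b
  have s2pos: "0 \<le> sqrt 2 * s" using s100 by simp
  then have uu: "real u = of_int \<lceil>sqrt 2 * s\<rceil>" unfolding u_def by simp
  have ru: "sqrt 2 * s \<le> real u" "real u < sqrt 2 * s + 1"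
    unfolding uu using ceiling_correct[of "sqrt 2 * s"] by linarith+
  have s2: "sqrt 2 * sqrt 2 = 2" by simp
  have Npos: "0 \<le> real N" by simp
  have t0: "0 \<le> real t" by simp
  have u0: "0 \<le> real u" by simp
  have f1: "100 * s \<le> real N" using s100 sN mult_right_mono[OF s100, of s] by linarith
  have tt: "real t * real t \<le> real N"
    using mult_mono[OF rt(1) rt(1)] s100 sN by simp
  have f2: "real N * real t \<le> real N * s" using mult_left_mono[OF rt(1) Npos] .
  have f3: "real N * (s - 1) \<le> real N * real t" using rt(2) Npos by (intro mult_left_mono) auto
  have f4: "100 * real N \<le> real N * s" using mult_left_mono[OF s100 Npos] by (simp add: algebra_simps)
  have f5: "10000 * real N \<le> real N * real N" using N mult_right_mono[of 10000 "real N" "real N"] by simp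
  have f6: "sqrt 2 * s \<le> 3/2 * s" using sq2 s100 by (intro mult_right_mono) auto
  have t1: "1 \<le> t" using rt s100 by linarith
  have t2: "2 * t + 1 \<le> N"
  proof -
    have "real (2 * t + 1) \<le> real N" using rt f1 s100 by simp
    then show ?thesis by linarith
  qed
  have t3: "(Suc t choose 2) + 1 < N - t"
  proof -
    have e: "2 * real (Suc t choose 2) = real t * real t + real t" by (simp add: real_choose2' algebra_simps)
    have "real (Suc t choose 2) + 1 < real N - real t"
      using e tt rt f1 s100 t0 by linarith
    then show ?thesis using t2 by linarith
  qed
  define M0 where "M0 = ((N - t) choose 2) + (Suc t choose 2) + 1"
  have rM0: "2 * real M0 = real N * real N - 2 * (real N * real t) + 2 * (real t * real t) - real N + 2 * real t + 2"
    unfolding M0_def using t2 by (simp add: distrib_left real_choose2' of_nat_diff algebra_simps)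
  have f7: "100 * (real N * s) \<le> real N * real N"
    using mult_left_mono[OF f1 Npos] by (simp add: algebra_simps)
  have t4: "N * (2 * t) < M0"
  proof -
    have q: "2 * real (N * (2 * t)) = 4 * (real N * real t)" by simp
    have "2 * real (N * (2 * t)) < 2 * real M0"
      unfolding q rM0 using tt rt f2 f7 f5 f1 s100 t0 mult_nonneg_nonneg[OF t0 t0] by linarith
    then show ?thesis by linarith
  qed
  have u1: "3 * u \<le> N"
  proof -
    have "3 * real u \<le> real N" using ru f6 f1 s100 by linarith
    then have "real (3 * u) \<le> real N" by simp
    then show ?thesis by linarith
  qed
  have u2: "2 * N \<le> u * u"
  proof -
    have "(sqrt 2 * s) * (sqrt 2 * s) \<le> real u * real u" using ru s2pos by (intro mult_mono) auto
    then have "real (2 * N) \<le> real (u * u)" using s2 sN by (simp add: algebra_simps)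
    then show ?thesis by linarith
  qed
  define L0 where "L0 = Suc (N - 3 * u) choose 2"
  have feas: "feasible_forest_pair N m" if "m < L0" for m
    using lower_feasible[OF u1 u2] that unfolding L0_def by blast
  have nf: "non_feasible_forest_pair N M0"
    unfolding non_feasible_forest_pair_def
  proof
    have "M0 < Suc (N - t) choose 2" using t3 unfolding M0_def by (simp add: choose2_Suc)
    also have "\<dots> \<le> N choose 2" using t1 t2 by (intro choose2_mono) simp
    finally show "M0 \<le> N choose 2" by simp
    show "\<not> feasible_forest_pair N M0" unfolding M0_def by (rule nonfeasible[OF t1 t2 t3 t4[unfolded M0_def]])
  qed
  have le1: "(LEAST M. non_feasible_forest_pair N M) \<le> M0" by (rule Least_le) (rule nf)
  have le2: "L0 \<le> (LEAST M. non_feasible_forest_pair N M)"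
  proof -
    have "non_feasible_forest_pair N (LEAST M. non_feasible_forest_pair N M)" by (rule LeastI) (rule nf)
    then show ?thesis using feas unfolding non_feasible_forest_pair_def by (meson not_le)
  qed
  have R1: "real N ^ 2 / 2 - 5 * real N * s \<le> real L0"
  proof -
    define A where "A = real (N - 3 * u)"
    have A: "A = real N - 3 * real u" using u1 by (simp add: of_nat_diff A_def)
    have A1: "A \<ge> s * s - 5 * s" using A ru f6 sN s100 by linarith
    have A0: "s * s - 5 * s \<ge> 0" using f1 sN s100 by linarith
    have "A * A \<ge> (s * s - 5 * s) * (s * s - 5 * s)"
      using A1 A0 by (intro mult_mono) auto
    also have "(s * s - 5 * s) * (s * s - 5 * s) = (s * s) * (s * s) - 10 * ((s * s) * s) + 25 * (s * s)"
      by (simp add: algebra_simps)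
    also have "\<dots> = real N * real N - 10 * (real N * s) + 25 * real N" unfolding sN ..
    finally have AA: "real N * real N - 10 * (real N * s) + 25 * real N \<le> A * A" .
    have "2 * real L0 = A * A + A"
      unfolding L0_def real_choose2' A_def by (simp add: algebra_simps)
    then have "2 * (real N ^ 2 / 2 - 5 * real N * s) \<le> 2 * real L0"
      using AA A0 A1 by (simp add: power2_eq_square algebra_simps)
    then show ?thesis by simp
  qed
  have R2': "2 * real M0 \<le> real N * real N - real N * s"
  proof -
    have f3': "real N * s - real N \<le> real N * real t" using f3 by (simp add: algebra_simps)
    show ?thesis using rM0 tt rt f3' f4 f1 s100 t0 by linarith
  qed
  have R2: "real M0 \<le> real N ^ 2 / 2 - 1/2 * real N * s"
    using R2' by (simp add: power2_eq_square field_simps)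
  show ?thesis
    using nf le1 le2 R1 R2 unfolding s_def[symmetric]
    by (smt (verit) of_nat_le_iff)
qed


theorem mainTheorem5:
  shows "\<exists>c0 c1 :: real. c0 \<ge> c1 \<and> c1 > 0 \<and>
    (\<exists>N0. \<forall>N \<ge> N0.
       (\<exists>M. non_feasible_forest_pair N M) \<and>
       real N ^ 2 / 2 - c0 * real N * sqrt (real N)
         \<le> real (LEAST M. non_feasible_forest_pair N M) \<and>
       real (LEAST M. non_feasible_forest_pair N M)
         \<le> real N ^ 2 / 2 - c1 * real N * sqrt (real N))"
  apply (rule exI[of _ 5], rule exI[of _ "1/2"])
  apply (intro conjI)
    apply simp
   apply simp
  apply (rule exI[of _ 10000])
  using main_N by blast

end
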